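(* Fix an integer $k\geq1$ and $V=\{0,\ldots,k\}$. Let $\varphi$ be a Boolean function on $V$ with $\mathrm{eul}(\varphi)\geq0$. Then there exists a Boolean function $\varphi_{\min}$ on $V$ with $\varphi_{\min}\simeq\varphi$ all of whose satisfying valuations have even size.
   Context: A valuation is a subset $\nu\subseteq V$; $\nu^{(l)}$ is $\nu$ with membership of $l$ flipped. A Boolean function on $V$ is a map $\varphi:2^V\to\{\text{false},\text{true}\}$; $\mathrm{sat}(\varphi)$ is its set of satisfying valuations; $\mathrm{eul}(\varphi)=\sum_{\nu\in\mathrm{sat}(\varphi)}(-1)^{|\nu|}$. Write $\varphi\xrightarrow{+(\nu,l)}\varphi'$ if $\nu,\nu^{(l)}\notin\mathrm{sat}(\varphi)$ and $\mathrm{sat}(\varphi')=\mathrm{sat}(\varphi)\cup\{\nu,\nu^{(l)}\}$, and $\varphi\xrightarrow{-(\nu,l)}\varphi'$ if $\varphi'\xrightarrow{+(\nu,l)}\varphi$. Write $\varphi\xrightarrow{\pm}\varphi'$ if one of these holds for some $\nu,l$; $\simeq$ is the reflexive-transitive closure of $\xrightarrow{\pm}$ (an equivalence relation). *)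

theory Defs
  imports Main
begin

text \<open>Boolean functions on a finite variable set V are modelled as predicates
  on nat set; only their values on subsets of V matter (via sat).\<close>

type_synonym boolfun = "nat set \<Rightarrow> bool"

definition flip :: "nat set \<Rightarrow> nat \<Rightarrow> nat set" where
  "flip \<nu> l = (if l \<in> \<nu> then \<nu> - {l} else insert l \<nu>)"

definition sat :: "nat set \<Rightarrow> boolfun \<Rightarrow> nat set set" where
  "sat V \<phi> = {\<nu>. \<nu> \<subseteq> V \<and> \<phi> \<nu>}"

definition eul :: "nat set \<Rightarrow> boolfun \<Rightarrow> int" where
  "eul V \<phi> = (\<Sum>\<nu>\<in>sat V \<phi>. (-1) ^ card \<nu>)"

definition add_step :: "nat set \<Rightarrow> boolfun \<Rightarrow> nat set \<Rightarrow> nat \<Rightarrow> boolfun \<Rightarrow> bool" where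
  "add_step V \<phi> \<nu> l \<phi>' \<longleftrightarrow> \<nu> \<subseteq> V \<and> l \<in> V \<and>
     \<nu> \<notin> sat V \<phi> \<and> flip \<nu> l \<notin> sat V \<phi> \<and>
     sat V \<phi>' = sat V \<phi> \<union> {\<nu>, flip \<nu> l}"

definition pm_step :: "nat set \<Rightarrow> boolfun \<Rightarrow> boolfun \<Rightarrow> bool" where
  "pm_step V \<phi> \<phi>' \<longleftrightarrow> (\<exists>\<nu> l. add_step V \<phi> \<nu> l \<phi>' \<or> add_step V \<phi>' \<nu> l \<phi>)"

definition equiv_bf :: "nat set \<Rightarrow> boolfun \<Rightarrow> boolfun \<Rightarrow> bool" where
  "equiv_bf V = (pm_step V)\<^sup>*\<^sup>*"

end

theory Submission
  imports Defs
begin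

definition evc :: "nat set \<Rightarrow> boolfun \<Rightarrow> nat" where
  "evc V \<phi> = card {\<nu> \<in> sat V \<phi>. even (card \<nu>)}"
definition odc :: "nat set \<Rightarrow> boolfun \<Rightarrow> nat" where
  "odc V \<phi> = card {\<nu> \<in> sat V \<phi>. odd (card \<nu>)}"
definition sd :: "nat set \<Rightarrow> nat set \<Rightarrow> nat set" where
  "sd a b = (a - b) \<union> (b - a)"

lemma sat_set: "S \<subseteq> Pow V \<Longrightarrow> sat V (\<lambda>\<nu>. \<nu> \<in> S) = S"
  by (auto simp: sat_def)

lemma sat_sub: "sat V \<phi> \<subseteq> Pow V"
  by (auto simp: sat_def)

lemma finite_sat: "finite V \<Longrightarrow> finite (sat V \<phi>)"
  using sat_sub by (meson finite_Pow_iff finite_subset)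

lemma flip_ne: "flip \<nu> l \<noteq> \<nu>"
  by (auto simp: flip_def)

lemma flip_sub: "\<nu> \<subseteq> V \<Longrightarrow> l \<in> V \<Longrightarrow> flip \<nu> l \<subseteq> V"
  by (auto simp: flip_def)

lemma flip_parity: "finite \<nu> \<Longrightarrow> even (card (flip \<nu> l)) \<longleftrightarrow> odd (card \<nu>)"
proof (cases "l \<in> \<nu>")
  case True
  assume f: "finite \<nu>"
  have c: "card (flip \<nu> l) = card \<nu> - 1" using True f by (simp add: flip_def card_Diff_singleton)
  have "card \<nu> > 0" using True f card_gt_0_iff by blast
  then show ?thesis using c by presburger
next
  case False
  assume f: "finite \<nu>"
  have c: "card (flip \<nu> l) = Suc (card \<nu>)" using False f by (simp add: flip_def)
  then show ?thesis by simp
qed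
lemma flip_flip_ne: "l1 \<noteq> l2 \<Longrightarrow> flip (flip \<nu> l1) l2 \<noteq> \<nu>"
  by (auto simp: flip_def split: if_splits)

lemma sd_flip: "l \<in> sd a b \<Longrightarrow> sd (flip a l) b = sd a b - {l}"
  by (auto simp: sd_def flip_def split: if_splits)

lemma sd_one: "sd a b = {l} \<Longrightarrow> b = flip a l"
proof -
  assume h: "sd a b = {l}"
  have m: "\<And>x. x \<in> sd a b \<longleftrightarrow> x = l" using h by blast
  have 1: "\<And>x. x \<noteq> l \<Longrightarrow> (x \<in> b \<longleftrightarrow> x \<in> a)" using m unfolding sd_def by blast
  have 2: "l \<in> b \<longleftrightarrow> l \<notin> a" using m[of l] unfolding sd_def by blast
  show ?thesis
  proof (rule set_eqI)
    fix x show "x \<in> b \<longleftrightarrow> x \<in> flip a l"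
      using 1[of x] 2 unfolding flip_def by (cases "x = l") auto
  qed
qed
lemma sd_sub: "a \<subseteq> V \<Longrightarrow> b \<subseteq> V \<Longrightarrow> sd a b \<subseteq> V"
  unfolding sd_def by blast
lemma sd_fin: "finite a \<Longrightarrow> finite b \<Longrightarrow> finite (sd a b)"
  unfolding sd_def by simp
lemma sd_empty: "sd a b = {} \<Longrightarrow> a = b"
  unfolding sd_def by blast

lemma card_swap: "finite A \<Longrightarrow> w \<in> A \<Longrightarrow> v \<notin> A \<Longrightarrow> card (insert v (A - {w})) = card A"
proof -
  assume a: "finite A" "w \<in> A" "v \<notin> A"
  have f: "finite (A - {w})" using a(1) by (rule finite_Diff)
  have n: "v \<notin> A - {w}" using a(3) by (rule contra_subsetD[OF Diff_subset])
  have "card (insert v (A - {w})) = Suc (card (A - {w}))" by (rule card_insert_disjoint[OF f n])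
  also have "\<dots> = card A" by (rule card_Suc_Diff1[OF a(1,2)])
  finally show ?thesis .
qed

lemma pm_sym: "pm_step V \<phi> \<psi> \<Longrightarrow> pm_step V \<psi> \<phi>"
  by (auto simp: pm_step_def)

lemma remove_pair:
  assumes fin: "finite V" and x: "x \<in> sat V \<phi>" and fx: "flip x l \<in> sat V \<phi>" and l: "l \<in> V"
    and ox: "odd (card x)"
  shows "\<exists>\<psi>. equiv_bf V \<psi> \<phi> \<and> evc V \<psi> = evc V \<phi> - 1 \<and> odc V \<psi> = odc V \<phi> - 1"
proof -
  define S where "S = sat V \<phi> - {x, flip x l}"
  have SP: "S \<subseteq> Pow V" using sat_sub S_def by blast
  have sS: "sat V (\<lambda>\<nu>. \<nu> \<in> S) = S" using sat_set[OF SP] .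
  have xV: "x \<subseteq> V" using x by (auto simp: sat_def)
  have finx: "finite x" using xV fin finite_subset by blast
  have ef: "even (card (flip x l))" using flip_parity[OF finx] ox by simp
  have "add_step V (\<lambda>\<nu>. \<nu> \<in> S) x l \<phi>"
    unfolding add_step_def sS using xV l x fx S_def by auto
  then have "pm_step V (\<lambda>\<nu>. \<nu> \<in> S) \<phi>" unfolding pm_step_def by blast
  then have eq: "equiv_bf V (\<lambda>\<nu>. \<nu> \<in> S) \<phi>" unfolding equiv_bf_def by (rule r_into_rtranclp[of "pm_step V"])
  have finS: "finite (sat V \<phi>)" using finite_sat[OF fin] .
  have e1: "{\<nu> \<in> S. even (card \<nu>)} = {\<nu> \<in> sat V \<phi>. even (card \<nu>)} - {flip x l}"
    using ox S_def by auto
  have o1: "{\<nu> \<in> S. odd (card \<nu>)} = {\<nu> \<in> sat V \<phi>. odd (card \<nu>)} - {x}"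
    using ef S_def by auto
  have "evc V (\<lambda>\<nu>. \<nu> \<in> S) = evc V \<phi> - 1"
    unfolding evc_def sS e1 using fx ef finS by (simp add: card_Diff_singleton)
  moreover have "odc V (\<lambda>\<nu>. \<nu> \<in> S) = odc V \<phi> - 1"
    unfolding odc_def sS o1 using x ox finS by (simp add: card_Diff_singleton)
  ultimately show ?thesis using eq by (intro exI[of _ "\<lambda>\<nu>. \<nu> \<in> S"]) simp
qed

lemma cancel:
  assumes fin: "finite V"
  shows "\<forall>\<phi> w e. w \<in> sat V \<phi> \<longrightarrow> e \<in> sat V \<phi> \<longrightarrow> odd (card w) \<longrightarrow> even (card e)
     \<longrightarrow> card (sd w e) = d \<longrightarrow>
     (\<exists>\<psi>. equiv_bf V \<psi> \<phi> \<and> evc V \<psi> = evc V \<phi> - 1 \<and> odc V \<psi> = odc V \<phi> - 1)"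
proof (induction d rule: less_induct)
  case (less d)
  show ?case
  proof (intro allI impI)
    fix \<phi> w e
    assume w: "w \<in> sat V \<phi>" and e: "e \<in> sat V \<phi>" and oo: "odd (card w)" and ee: "even (card e)"
      and d: "card (sd w e) = d"
    have oV: "w \<subseteq> V" using w by (auto simp: sat_def)
    have eV: "e \<subseteq> V" using e by (auto simp: sat_def)
    have fino: "finite w" using oV fin finite_subset by blast
    have fine: "finite e" using eV fin finite_subset by blast
    have sdV: "sd w e \<subseteq> V" using sd_sub[OF oV eV] .
    have finsd: "finite (sd w e)" using sd_fin[OF fino fine] .
    have "w \<noteq> e" using oo ee by auto
    then have "sd w e \<noteq> {}" using sd_empty by blast
    then obtain l1 where l1: "l1 \<in> sd w e" by blast
    show "\<exists>\<psi>. equiv_bf V \<psi> \<phi> \<and> evc V \<psi> = evc V \<phi> - 1 \<and> odc V \<psi> = odc V \<phi> - 1"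
    proof (cases "sd w e = {l1}")
      case True
      then have "e = flip w l1" using sd_one by blast
      then show ?thesis using remove_pair[OF fin w _ _ oo] e l1 sdV by blast
    next
      case False
      then obtain l2 where l2: "l2 \<in> sd w e" "l2 \<noteq> l1" using l1 by blast
      define v1 where "v1 = flip w l1"
      define v2 where "v2 = flip v1 l2"
      have l1V: "l1 \<in> V" and l2V: "l2 \<in> V" using l1 l2 sdV by auto
      have v1V: "v1 \<subseteq> V" using flip_sub[OF oV l1V] v1_def by simp
      have v2V: "v2 \<subseteq> V" using flip_sub[OF v1V l2V] v2_def by simp
      have finv1: "finite v1" using v1V fin finite_subset by blast
      have ev1: "even (card v1)" using flip_parity[OF fino] oo v1_def by simp
      have ov2: "odd (card v2)" using flip_parity[OF finv1] ev1 v2_def by simp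
      have sd1: "sd v1 e = sd w e - {l1}" using sd_flip[OF l1] v1_def by simp
      have l2': "l2 \<in> sd v1 e" using sd1 l2 by auto
      have sd2: "sd v2 e = sd w e - {l1} - {l2}" using sd_flip[OF l2'] sd1 v2_def by simp
      have cd2: "card (sd v2 e) < d" using sd2 d finsd l1 l2
        by (metis card_Diff1_less finite_Diff insert_Diff insert_iff order.strict_trans)
      show ?thesis
      proof (cases "v1 \<in> sat V \<phi>")
        case True
        then show ?thesis using remove_pair[OF fin w _ l1V oo] v1_def by blast
      next
        case nv1: False
        show ?thesis
        proof (cases "v2 \<in> sat V \<phi>")
          case True
          then show ?thesis by (rule less.IH[OF cd2, rule_format, OF _ e ov2 ee refl])
        next
          case nv2: False
          define S2 where "S2 = sat V \<phi> \<union> {v2} - {w}"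
          define S1 where "S1 = sat V \<phi> \<union> {v1, v2}"
          have S2P: "S2 \<subseteq> Pow V" using sat_sub S2_def v2V by blast
          have S1P: "S1 \<subseteq> Pow V" using sat_sub S1_def v2V v1V by blast
          have sS2: "sat V (\<lambda>\<nu>. \<nu> \<in> S2) = S2" using sat_set[OF S2P] .
          have sS1: "sat V (\<lambda>\<nu>. \<nu> \<in> S1) = S1" using sat_set[OF S1P] .
          have v2o: "v2 \<noteq> w" unfolding v2_def v1_def by (rule flip_flip_ne) (rule not_sym[OF l2(2)])
          have v12: "v2 \<noteq> v1" unfolding v2_def by (rule flip_ne)
          have a1: "add_step V \<phi> v1 l2 (\<lambda>\<nu>. \<nu> \<in> S1)"
            unfolding add_step_def sS1 using v1V l2V nv1 nv2 S1_def v2_def by auto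
          have a2: "add_step V (\<lambda>\<nu>. \<nu> \<in> S2) w l1 (\<lambda>\<nu>. \<nu> \<in> S1)"
            unfolding add_step_def sS1 sS2 using oV l1V nv1 w v2o v12 S1_def S2_def v1_def
            by auto
          have EQ: "equiv_bf V (\<lambda>\<nu>. \<nu> \<in> S2) \<phi>"
          proof -
            have p1: "pm_step V (\<lambda>\<nu>. \<nu> \<in> S2) (\<lambda>\<nu>. \<nu> \<in> S1)" using a2 pm_step_def by blast
            have p2: "pm_step V (\<lambda>\<nu>. \<nu> \<in> S1) \<phi>" using a1 pm_step_def by blast
            show ?thesis unfolding equiv_bf_def
              by (rule converse_rtranclp_into_rtranclp[of "pm_step V", OF p1 r_into_rtranclp[of "pm_step V", OF p2]])
          qed
          have EV: "evc V (\<lambda>\<nu>. \<nu> \<in> S2) = evc V \<phi>"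
          proof -
            have "{\<nu> \<in> S2. even (card \<nu>)} = {\<nu> \<in> sat V \<phi>. even (card \<nu>)}"
              using S2_def oo ov2 by auto
            then show ?thesis unfolding evc_def sS2 by simp
          qed
          have OD: "odc V (\<lambda>\<nu>. \<nu> \<in> S2) = odc V \<phi>"
          proof -
            have A: "{\<nu> \<in> S2. odd (card \<nu>)} = insert v2 ({\<nu> \<in> sat V \<phi>. odd (card \<nu>)} - {w})"
              using S2_def oo ov2 v2o by auto
            have F: "finite {\<nu> \<in> sat V \<phi>. odd (card \<nu>)}" using finite_sat[OF fin] by simp
            have W: "w \<in> {\<nu> \<in> sat V \<phi>. odd (card \<nu>)}" using w oo by simp
            have N: "v2 \<notin> {\<nu> \<in> sat V \<phi>. odd (card \<nu>)}" using nv2 by simp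
            show ?thesis unfolding odc_def sS2 A by (rule card_swap[OF F W N])
          qed
          have V2: "v2 \<in> sat V (\<lambda>\<nu>. \<nu> \<in> S2)" "e \<in> sat V (\<lambda>\<nu>. \<nu> \<in> S2)"
            unfolding sS2 using S2_def e \<open>w \<noteq> e\<close> v2o by auto
          have "\<exists>\<psi>. equiv_bf V \<psi> (\<lambda>\<nu>. \<nu> \<in> S2) \<and> evc V \<psi> = evc V (\<lambda>\<nu>. \<nu> \<in> S2) - 1
              \<and> odc V \<psi> = odc V (\<lambda>\<nu>. \<nu> \<in> S2) - 1"
            by (rule less.IH[OF cd2, rule_format, OF V2(1) V2(2) ov2 ee refl])
          then obtain \<psi> where q: "equiv_bf V \<psi> (\<lambda>\<nu>. \<nu> \<in> S2)"
            "evc V \<psi> = evc V \<phi> - 1" "odc V \<psi> = odc V \<phi> - 1"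
            unfolding EV OD by blast
          have "equiv_bf V \<psi> \<phi>" using q(1) EQ
            unfolding equiv_bf_def by (rule rtranclp_trans)
          then show ?thesis using q(2,3) by blast
        qed
      qed
    qed
  qed
qed

lemma eul_split: "finite (sat V \<phi>) \<Longrightarrow> eul V \<phi> = int (evc V \<phi>) - int (odc V \<phi>)"
proof -
  assume f: "finite (sat V \<phi>)"
  let ?A = "sat V \<phi>"
  have "eul V \<phi> = (\<Sum>\<nu>\<in>?A. if even (card \<nu>) then 1 else -1)"
    unfolding eul_def by (intro sum.cong) (auto simp: minus_one_power_iff)
  also have "\<dots> = (\<Sum>\<nu>\<in>?A \<inter> {\<nu>. even (card \<nu>)}. 1) + (\<Sum>\<nu>\<in>?A \<inter> - {\<nu>. even (card \<nu>)}. -1)"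
    by (rule sum.If_cases[OF f])
  also have "?A \<inter> {\<nu>. even (card \<nu>)} = {\<nu> \<in> ?A. even (card \<nu>)}" by blast
  also have "?A \<inter> - {\<nu>. even (card \<nu>)} = {\<nu> \<in> ?A. odd (card \<nu>)}" by blast
  finally show ?thesis unfolding evc_def odc_def by simp
qed

lemma main:
  assumes fin: "finite V"
  shows "\<forall>\<phi>. odc V \<phi> = n \<longrightarrow> odc V \<phi> \<le> evc V \<phi> \<longrightarrow>
     (\<exists>\<phi>min. equiv_bf V \<phi>min \<phi> \<and> (\<forall>\<nu>\<in>sat V \<phi>min. even (card \<nu>)))"
proof (induction n)
  case 0
  show ?case
  proof (intro allI impI)
    fix \<phi> assume "odc V \<phi> = 0"
    then have "{\<nu> \<in> sat V \<phi>. odd (card \<nu>)} = {}"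
      unfolding odc_def using finite_sat[OF fin] by simp
    then show "\<exists>\<phi>min. equiv_bf V \<phi>min \<phi> \<and> (\<forall>\<nu>\<in>sat V \<phi>min. even (card \<nu>))"
      unfolding equiv_bf_def by blast
  qed
next
  case (Suc n)
  show ?case
  proof (intro allI impI)
    fix \<phi> assume a: "odc V \<phi> = Suc n" and b: "odc V \<phi> \<le> evc V \<phi>"
    then have "{\<nu> \<in> sat V \<phi>. odd (card \<nu>)} \<noteq> {}" unfolding odc_def by (metis card.empty Zero_not_Suc)
    then obtain w where w: "w \<in> sat V \<phi>" "odd (card w)" by blast
    have "evc V \<phi> \<ge> 1" using a b by linarith
    then have "{\<nu> \<in> sat V \<phi>. even (card \<nu>)} \<noteq> {}" unfolding evc_def by (metis card.empty not_one_le_zero)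
    then obtain e where e: "e \<in> sat V \<phi>" "even (card e)" by blast
    obtain \<psi> where p: "equiv_bf V \<psi> \<phi>" "evc V \<psi> = evc V \<phi> - 1" "odc V \<psi> = odc V \<phi> - 1"
      using cancel[OF fin, rule_format, OF w(1) e(1) w(2) e(2) refl] by blast
    have "odc V \<psi> = n" using p(3) a by simp
    moreover have "odc V \<psi> \<le> evc V \<psi>" using p(2,3) a b by simp
    ultimately have "\<exists>\<phi>min. equiv_bf V \<phi>min \<psi> \<and> (\<forall>\<nu>\<in>sat V \<phi>min. even (card \<nu>))"
      using Suc.IH by blast
    then obtain m where m: "equiv_bf V m \<psi>" "\<forall>\<nu>\<in>sat V m. even (card \<nu>)" by blast
    have "equiv_bf V m \<phi>" using m(1) p(1) unfolding equiv_bf_def by (rule rtranclp_trans)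
    then show "\<exists>\<phi>min. equiv_bf V \<phi>min \<phi> \<and> (\<forall>\<nu>\<in>sat V \<phi>min. even (card \<nu>))"
      using m(2) by blast
  qed
qed

theorem lemma6p5:
  fixes k :: nat and \<phi> :: boolfun
  assumes "k \<ge> 1"
    and "eul {0..k} \<phi> \<ge> 0"
  shows "\<exists>\<phi>min :: boolfun. equiv_bf {0..k} \<phi>min \<phi> \<and>
           (\<forall>\<nu>\<in>sat {0..k} \<phi>min. even (card \<nu>))"
proof -
  have "odc {0..k} \<phi> \<le> evc {0..k} \<phi>" using assms(2) eul_split[OF finite_sat, of "{0..k}" \<phi>] by simp
  then show ?thesis using main[of "{0..k}"] by simp
qed

end
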